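(* Let $L\in\mathcal{N}$ and assume that $L$ has no doubly reducible elements. Then there do not exist twelve distinct elements $x',x,b,z,z',w',w,a,s,y,y',c\in L$ such that the subposet of $L$ they form is the poset whose order is generated by the relations $$x'<x<b<z<z',\quad w'<w<a<s<y<y',\quad w'<x',\ w<x,\ a<c<b,\ y<z,\ y'<z'$$ (i.e. its Hasse diagram consists of exactly these covering relations), and such that the sublattice of $L$ generated by $\{x',x,b,z,z',w',w,a,y,y'\}$ is isomorphic to $\mathbf{2}\times\mathbf{5}$ (with $x'<x<b<z<z'$ and $w'<w<a<y<y'$ the two five-element chains and $w'<x'$, $w<x$, $a<b$, $y<z$, $y'<z'$ the rungs).
   Context: $\mathcal{N}$ denotes the variety of lattices generated by the pentagon $N_5$. For elements $u,v$, $u\parallel v$ means neither $u\le v$ nor $v\le u$. An element $e$ of a lattice $L$ is doubly reducible if there exist $e_1,e_2,e_3,e_4\in L$ with $e_1\parallel e_2$, $e_3\parallel e_4$ and $e=e_1\vee e_2=e_3\wedge e_4$. $\mathbf{n}$ denotes the $n$-element chain and $\times$ the direct product of posets. *)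

theory Defs
  imports Main
begin

datatype lterm = LVar nat | LJoin lterm lterm | LMeet lterm lterm

primrec eval_lterm :: "(nat \<Rightarrow> 'a::lattice) \<Rightarrow> lterm \<Rightarrow> 'a" where
  "eval_lterm \<sigma> (LVar i) = \<sigma> i"
| "eval_lterm \<sigma> (LJoin s t) = sup (eval_lterm \<sigma> s) (eval_lterm \<sigma> t)"
| "eval_lterm \<sigma> (LMeet s t) = inf (eval_lterm \<sigma> s) (eval_lterm \<sigma> t)"

text \<open>The pentagon N5 on carrier {0..4}: 0 = bottom, 1 < 2, 3 incomparable to 1 and 2, 4 = top.\<close>

definition n5_le :: "nat \<Rightarrow> nat \<Rightarrow> bool" where
  "n5_le x y \<longleftrightarrow> x = y \<or> x = 0 \<or> y = 4 \<or> (x = 1 \<and> y = 2)"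

definition n5_join :: "nat \<Rightarrow> nat \<Rightarrow> nat" where
  "n5_join x y = (if n5_le x y then y else if n5_le y x then x else 4)"

definition n5_meet :: "nat \<Rightarrow> nat \<Rightarrow> nat" where
  "n5_meet x y = (if n5_le x y then x else if n5_le y x then y else 0)"

primrec eval_n5 :: "(nat \<Rightarrow> nat) \<Rightarrow> lterm \<Rightarrow> nat" where
  "eval_n5 \<rho> (LVar i) = \<rho> i"
| "eval_n5 \<rho> (LJoin s t) = n5_join (eval_n5 \<rho> s) (eval_n5 \<rho> t)"
| "eval_n5 \<rho> (LMeet s t) = n5_meet (eval_n5 \<rho> s) (eval_n5 \<rho> t)"

definition n5_satisfies :: "lterm \<Rightarrow> lterm \<Rightarrow> bool" where
  "n5_satisfies s t \<longleftrightarrow> (\<forall>\<rho>. (\<forall>i. \<rho> i \<le> 4) \<longrightarrow> eval_n5 \<rho> s = eval_n5 \<rho> t)"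

text \<open>A lattice (type) belongs to the variety \<N> generated by N5 iff it satisfies
  every lattice identity that holds in N5 (Birkhoff).\<close>
definition in_var_N5 :: "'a::lattice itself \<Rightarrow> bool" where
  "in_var_N5 _ \<longleftrightarrow> (\<forall>s t. n5_satisfies s t \<longrightarrow> (\<forall>\<sigma>::nat \<Rightarrow> 'a. eval_lterm \<sigma> s = eval_lterm \<sigma> t))"

definition incomparable :: "'a::order \<Rightarrow> 'a \<Rightarrow> bool" where
  "incomparable u v \<longleftrightarrow> \<not> u \<le> v \<and> \<not> v \<le> u"

definition doubly_reducible :: "'a::lattice \<Rightarrow> bool" where
  "doubly_reducible e \<longleftrightarrow> (\<exists>e1 e2 e3 e4. incomparable e1 e2 \<and> incomparable e3 e4 \<and>
      e = sup e1 e2 \<and> e = inf e3 e4)"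

inductive_set lat_gen :: "'a::lattice set \<Rightarrow> 'a set" for S where
  gen_base: "x \<in> S \<Longrightarrow> x \<in> lat_gen S"
| gen_sup: "x \<in> lat_gen S \<Longrightarrow> y \<in> lat_gen S \<Longrightarrow> sup x y \<in> lat_gen S"
| gen_inf: "x \<in> lat_gen S \<Longrightarrow> y \<in> lat_gen S \<Longrightarrow> inf x y \<in> lat_gen S"

text \<open>Indices: x'=0, x=1, b=2, z=3, z'=4, w'=5, w=6, a=7, s=8, y=9, y'=10, c=11.
  The order of the poset is the reflexive-transitive closure of these relations.\<close>
definition P12_gen :: "(nat \<times> nat) set" where
  "P12_gen = {(0,1),(1,2),(2,3),(3,4),
              (5,6),(6,7),(7,8),(8,9),(9,10),
              (5,0),(6,1),(7,11),(11,2),(9,3),(10,4)}"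

definition P12_le :: "nat \<Rightarrow> nat \<Rightarrow> bool" where
  "P12_le i j \<longleftrightarrow> (i, j) \<in> P12_gen\<^sup>*"

text \<open>The lattice 2 x 5 on {0,1} x {0..4} with componentwise order.\<close>
definition two_by_five :: "(nat \<times> nat) set" where
  "two_by_five = {0..1} \<times> {0..4}"

end

theory Submission
  imports Defs
begin


primrec lvars :: "lterm \<Rightarrow> nat set" where
  "lvars (LVar i) = {i}"
| "lvars (LJoin s t) = lvars s \<union> lvars t"
| "lvars (LMeet s t) = lvars s \<union> lvars t"

lemma eval_n5_cong: "(\<forall>i\<in>lvars s. \<rho> i = \<rho>' i) \<Longrightarrow> eval_n5 \<rho> s = eval_n5 \<rho>' s"
  by (induction s) auto

definition rho4 :: "nat \<Rightarrow> nat \<Rightarrow> nat \<Rightarrow> nat \<Rightarrow> nat \<Rightarrow> nat" where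
  "rho4 a b c d = (\<lambda>i. if i = 0 then a else if i = 1 then b else if i = 2 then c else d)"

lemma rho4_simps[simp]: "rho4 a b c d 0 = a" "rho4 a b c d 1 = b" "rho4 a b c d 2 = c" "rho4 a b c d 3 = d"
  by (simp_all add: rho4_def)
lemma rho4_suc[simp]: "rho4 a b c d (Suc 0) = b" by (simp add: rho4_def)

lemma n5_sat4:
  assumes "lvars s \<subseteq> {0,1,2,3}" "lvars t \<subseteq> {0,1,2,3}"
    and "\<forall>a\<in>{0,1,2,3,4}. \<forall>b\<in>{0,1,2,3,4}. \<forall>c\<in>{0,1,2,3,4}. \<forall>d\<in>{0,1,2,3,4}.
          eval_n5 (rho4 a b c d) s = eval_n5 (rho4 a b c d) t"
  shows "n5_satisfies s t"
  unfolding n5_satisfies_def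
proof (intro allI impI)
  fix \<rho> :: "nat \<Rightarrow> nat" assume h: "\<forall>i. \<rho> i \<le> 4"
  have m: "\<rho> i \<in> {0,1,2,3,4}" for i using h[rule_format, of i] by auto
  have ag: "\<forall>i\<in>{0,1,2,3}. \<rho> i = rho4 (\<rho> 0) (\<rho> 1) (\<rho> 2) (\<rho> 3) i" by simp
  have "eval_n5 \<rho> s = eval_n5 (rho4 (\<rho> 0) (\<rho> 1) (\<rho> 2) (\<rho> 3)) s"
    using ag assms(1) by (intro eval_n5_cong) blast
  also have "\<dots> = eval_n5 (rho4 (\<rho> 0) (\<rho> 1) (\<rho> 2) (\<rho> 3)) t"
    using assms(3) m by blast
  also have "\<dots> = eval_n5 \<rho> t"
    using ag assms(2) by (intro eval_n5_cong[symmetric]) blast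
  finally show "eval_n5 \<rho> s = eval_n5 \<rho> t" .
qed

lemma use_id:
  assumes "in_var_N5 TYPE('a::lattice)" "n5_satisfies s t"
  shows "eval_lterm (\<sigma>::nat \<Rightarrow> 'a) s = eval_lterm \<sigma> t"
  using assms unfolding in_var_N5_def by blast

definition L4 :: "'a \<Rightarrow> 'a \<Rightarrow> 'a \<Rightarrow> 'a \<Rightarrow> nat \<Rightarrow> 'a" where
  "L4 a b c d = (\<lambda>i. if i = 0 then a else if i = 1 then b else if i = 2 then c else d)"

lemma L4_simps[simp]: "L4 a b c d 0 = a" "L4 a b c d 1 = b" "L4 a b c d 2 = c" "L4 a b c d 3 = d"
  by (simp_all add: L4_def)
lemma L4_suc[simp]: "L4 a b c d (Suc 0) = b" by (simp add: L4_def)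

lemma n5_tab:
  "n5_join 0 0 = 0" "n5_join 0 1 = 1" "n5_join 0 2 = 2" "n5_join 0 3 = 3" "n5_join 0 4 = 4"
  "n5_join 1 0 = 1" "n5_join 1 1 = 1" "n5_join 1 2 = 2" "n5_join 1 3 = 4" "n5_join 1 4 = 4"
  "n5_join 2 0 = 2" "n5_join 2 1 = 2" "n5_join 2 2 = 2" "n5_join 2 3 = 4" "n5_join 2 4 = 4"
  "n5_join 3 0 = 3" "n5_join 3 1 = 4" "n5_join 3 2 = 4" "n5_join 3 3 = 3" "n5_join 3 4 = 4"
  "n5_join 4 0 = 4" "n5_join 4 1 = 4" "n5_join 4 2 = 4" "n5_join 4 3 = 4" "n5_join 4 4 = 4"
  "n5_meet 0 0 = 0" "n5_meet 0 1 = 0" "n5_meet 0 2 = 0" "n5_meet 0 3 = 0" "n5_meet 0 4 = 0"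
  "n5_meet 1 0 = 0" "n5_meet 1 1 = 1" "n5_meet 1 2 = 1" "n5_meet 1 3 = 0" "n5_meet 1 4 = 1"
  "n5_meet 2 0 = 0" "n5_meet 2 1 = 1" "n5_meet 2 2 = 2" "n5_meet 2 3 = 0" "n5_meet 2 4 = 2"
  "n5_meet 3 0 = 0" "n5_meet 3 1 = 0" "n5_meet 3 2 = 0" "n5_meet 3 3 = 3" "n5_meet 3 4 = 3"
  "n5_meet 4 0 = 0" "n5_meet 4 1 = 1" "n5_meet 4 2 = 2" "n5_meet 4 3 = 3" "n5_meet 4 4 = 4"
  by (simp_all add: n5_join_def n5_meet_def n5_le_def)
lemmas n5_tab' = n5_tab[unfolded One_nat_def]

definition gT :: "lterm \<Rightarrow> lterm \<Rightarrow> lterm \<Rightarrow> lterm \<Rightarrow> lterm" where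
  "gT u v q p = LJoin (LJoin p (LMeet (LJoin u p) (LJoin v p))) (LMeet (LJoin u p) (LJoin q p))"
definition g5 :: "nat \<Rightarrow> nat \<Rightarrow> nat \<Rightarrow> nat \<Rightarrow> nat" where
  "g5 u v q p = n5_join (n5_join p (n5_meet (n5_join u p) (n5_join v p))) (n5_meet (n5_join u p) (n5_join q p))"
definition gL :: "'a::lattice \<Rightarrow> 'a \<Rightarrow> 'a \<Rightarrow> 'a \<Rightarrow> 'a" where
  "gL u v q p = sup (sup p (inf (sup u p) (sup v p))) (inf (sup u p) (sup q p))"
lemma gT_n5[simp]: "eval_n5 \<rho> (gT u v q p) = g5 (eval_n5 \<rho> u) (eval_n5 \<rho> v) (eval_n5 \<rho> q) (eval_n5 \<rho> p)"
  by (simp add: gT_def g5_def)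
lemma gT_L[simp]: "eval_lterm \<sigma> (gT u v q p) = gL (eval_lterm \<sigma> u) (eval_lterm \<sigma> v) (eval_lterm \<sigma> q) (eval_lterm \<sigma> p)"
  by (simp add: gT_def gL_def)
lemma lvars_gT[simp]: "lvars (gT u v q p) = lvars u \<union> lvars v \<union> lvars q \<union> lvars p"
  by (auto simp: gT_def)

definition fT :: "lterm \<Rightarrow> lterm \<Rightarrow> lterm \<Rightarrow> lterm" where
  "fT b yp y = LMeet (LJoin b y) (LJoin yp y)"
definition f5 :: "nat \<Rightarrow> nat \<Rightarrow> nat \<Rightarrow> nat" where
  "f5 b yp y = n5_meet (n5_join b y) (n5_join yp y)"
lemma fT_n5[simp]: "eval_n5 \<rho> (fT b yp y) = f5 (eval_n5 \<rho> b) (eval_n5 \<rho> yp) (eval_n5 \<rho> y)"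
  by (simp add: fT_def f5_def)
lemma fT_L[simp]: "eval_lterm \<sigma> (fT b yp y) = inf (sup (eval_lterm \<sigma> b) (eval_lterm \<sigma> y)) (sup (eval_lterm \<sigma> yp) (eval_lterm \<sigma> y))"
  by (simp add: fT_def)
lemma lvars_fT[simp]: "lvars (fT b yp y) = lvars b \<union> lvars yp \<union> lvars y"
  by (auto simp: fT_def)

abbreviation "V0 \<equiv> LVar 0"
abbreviation "V1 \<equiv> LVar 1"
abbreviation "V2 \<equiv> LVar 2"
abbreviation "V3 \<equiv> LVar 3"

definition "ps1 = gT V0 V1 V2 (gT V0 V1 V2 V3)"
definition "X1 = LMeet (LJoin V0 ps1) (LJoin (LJoin V1 ps1) (LJoin V2 ps1))"

lemma ball5: "(\<forall>a\<in>{0,1,2,3,4::nat}. P a) \<longleftrightarrow> P 0 \<and> P 1 \<and> P 2 \<and> P 3 \<and> P 4"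
  by auto

lemma n5_qi1: "n5_satisfies (LMeet X1 ps1) X1"
  apply (rule n5_sat4)
    apply (simp add: X1_def ps1_def)
   apply (simp add: X1_def ps1_def)
  apply (simp only: ball5)
  apply (simp add: X1_def ps1_def g5_def n5_tab n5_tab')
  done


definition "X2 = LMeet (LJoin V2 (fT V2 V1 V0)) (LJoin (LJoin V1 (fT V2 V1 V0)) (LMeet V3 V2))"
definition "Y2 = LJoin (fT V2 V1 V0) (LMeet V2 (LJoin (LJoin V1 (fT V2 V1 V0)) (LMeet V3 V2)))"
lemma n5_qi2: "n5_satisfies (LMeet X2 Y2) X2"
  apply (rule n5_sat4)
    apply (simp add: X2_def Y2_def)
   apply (simp add: X2_def Y2_def)
  apply (simp only: ball5)
  apply (simp add: X2_def Y2_def f5_def n5_tab n5_tab')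
  done

definition "X3 = LMeet (LJoin V0 (fT V0 V2 V1)) (LJoin (LJoin V2 (fT V0 V2 V1)) (LMeet V0 (LJoin V3 (LJoin V2 (fT V0 V2 V1)))))"
definition "Y3 = LJoin (fT V0 V2 V1) (LMeet V0 (LJoin V3 (LJoin V2 (fT V0 V2 V1))))"
lemma n5_qi3: "n5_satisfies (LMeet X3 Y3) X3"
  apply (rule n5_sat4)
    apply (simp add: X3_def Y3_def)
   apply (simp add: X3_def Y3_def)
  apply (simp only: ball5)
  apply (simp add: X3_def Y3_def f5_def n5_tab n5_tab')
  done

definition "B4 = LJoin V2 (LMeet V0 V1)"
definition "X4 = LMeet B4 (LJoin V1 (LMeet V2 V3))"
definition "Y4 = LJoin (LMeet B4 V1) (LMeet V2 (LJoin V1 V3))"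
lemma n5_qi4: "n5_satisfies (LMeet X4 Y4) X4"
  apply (rule n5_sat4)
    apply (simp add: X4_def Y4_def B4_def)
   apply (simp add: X4_def Y4_def B4_def)
  apply (simp only: ball5)
  apply (simp add: X4_def Y4_def B4_def n5_tab n5_tab')
  done

definition "X5 = LJoin (LMeet V0 V1) (LMeet (LMeet V2 V0) (LJoin V1 (LJoin V3 (LMeet V0 V1))))"
definition "Y5 = LMeet V0 (LJoin V1 (LMeet (LMeet V2 V0) (LJoin V3 (LMeet V0 V1))))"
lemma n5_qi5: "n5_satisfies (LMeet X5 Y5) X5"
  apply (rule n5_sat4)
    apply (simp add: X5_def Y5_def)
   apply (simp add: X5_def Y5_def)
  apply (simp only: ball5)
  apply (simp add: X5_def Y5_def n5_tab n5_tab')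
  done

lemma qi1:
  fixes u v q p :: "'a::lattice"
  assumes V: "in_var_N5 TYPE('a)" and h: "p \<le> u" "p \<le> v" "p \<le> q" "inf u v \<le> p" "inf u q \<le> p"
  shows "inf u (sup v q) \<le> p"
proof -
  have s: "sup u p = u" "sup v p = v" "sup q p = q" using h by (auto simp: sup.absorb1)
  have g: "gL u v q p = p" using h unfolding gL_def s by (simp add: sup.absorb1)
  have "eval_lterm (L4 u v q p) (LMeet X1 ps1) = eval_lterm (L4 u v q p) X1" by (rule use_id[OF V n5_qi1])
  hence "inf (inf u (sup v q)) p = inf u (sup v q)" by (simp add: X1_def ps1_def g s)
  thus ?thesis by (metis inf.orderI inf_commute)
qed

lemma qi2:
  fixes y yp b c :: "'a::lattice"
  assumes V: "in_var_N5 TYPE('a)" and h: "y \<le> yp" "c \<le> b" "inf (sup b y) yp = y"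
  shows "inf (sup b y) (sup yp c) \<le> sup y (inf b (sup yp c))"
proof -
  have f: "inf (sup b y) (sup yp y) = y" using h by (simp add: sup.absorb1)
  have "eval_lterm (L4 y yp b c) (LMeet X2 Y2) = eval_lterm (L4 y yp b c) X2" by (rule use_id[OF V n5_qi2])
  hence "inf (inf (sup b y) (sup (sup yp y) c)) (sup y (inf b (sup (sup yp y) c))) = inf (sup b y) (sup (sup yp y) c)"
    by (simp add: X2_def Y2_def f inf.absorb1 h)
  moreover have "sup yp y = yp" using h by (simp add: sup.absorb1)
  ultimately show ?thesis by (metis inf.orderI inf_commute)
qed

lemma qi3:
  fixes xp w a c :: "'a::lattice"
  assumes V: "in_var_N5 TYPE('a)" and h: "w \<le> a" "a \<le> c" "inf (sup xp w) a = w"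
  shows "inf (sup xp w) (sup a (inf xp c)) \<le> sup w (inf xp c)"
proof -
  have sa: "sup a w = a" using h by (simp add: sup.absorb1)
  have f: "inf (sup xp w) (sup a w) = w" using h sa by simp
  have sc: "sup c a = c" using h by (simp add: sup.absorb1)
  have "eval_lterm (L4 xp w a c) (LMeet X3 Y3) = eval_lterm (L4 xp w a c) X3" by (rule use_id[OF V n5_qi3])
  hence "inf (inf (sup xp w) (sup a (inf xp c))) (sup w (inf xp c)) = inf (sup xp w) (sup a (inf xp c))"
    by (simp add: X3_def Y3_def sa sc h(3))
  thus ?thesis by (metis inf.orderI inf_commute)
qed

lemma qi4:
  fixes b s x c :: "'a::lattice"
  assumes V: "in_var_N5 TYPE('a)" and h: "b = sup x (inf b s)"
  shows "inf b (sup s (inf x c)) \<le> sup (inf b s) (inf x (sup s c))"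
proof -
  have "eval_lterm (L4 b s x c) (LMeet X4 Y4) = eval_lterm (L4 b s x c) X4" by (rule use_id[OF V n5_qi4])
  hence "inf (inf b (sup s (inf x c))) (sup (inf b s) (inf x (sup s c))) = inf b (sup s (inf x c))"
    by (simp add: X4_def Y4_def B4_def h[symmetric])
  thus ?thesis by (metis inf.orderI inf_commute)
qed

lemma qi5:
  fixes b s x c :: "'a::lattice"
  assumes V: "in_var_N5 TYPE('a)" and h: "x \<le> b" "inf b s \<le> c"
  shows "sup (inf b s) (inf x (sup s c)) \<le> inf b (sup s (inf x c))"
proof -
  have e1: "inf x b = x" using h by (simp add: inf.absorb1)
  have e2: "sup c (inf b s) = c" using h by (simp add: sup.absorb1)
  have "eval_lterm (L4 b s x c) (LMeet X5 Y5) = eval_lterm (L4 b s x c) X5" by (rule use_id[OF V n5_qi5])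
  hence "inf (sup (inf b s) (inf x (sup s c))) (inf b (sup s (inf x c))) = sup (inf b s) (inf x (sup s c))"
    by (simp add: X5_def Y5_def e1 e2)
  thus ?thesis by (metis inf.orderI inf_commute)
qed


definition downL :: "nat list list" where
  "downL = [[5],[0,5,6],[0,1,5,6,7,11],[0,1,2,5,6,7,8,9,11],[0,1,2,3,5,6,7,8,9,10,11],[],[5],[5,6],[5,6,7],[5,6,7,8],[5,6,7,8,9],[5,6,7]]"
definition down :: "nat \<Rightarrow> nat set" where
  "down j = (if j < 12 then set (downL ! j) else {})"

lemma gen_down: "(j,k) \<in> P12_gen \<Longrightarrow> j \<in> down k \<and> down j \<subseteq> down k"
  apply (simp add: P12_gen_def)
  apply (elim disjE conjE; simp add: down_def downL_def)
  done

lemma P12_gen_le: "(i,j) \<in> P12_gen \<Longrightarrow> P12_le i j"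
  unfolding P12_le_def by (rule r_into_rtrancl)

lemma P12_le_cases: "P12_le i j \<Longrightarrow> i = j \<or> i \<in> down j"
  unfolding P12_le_def
proof (induction rule: rtrancl_induct)
  case base then show ?case by simp
next
  case (step y z) then show ?case using gen_down[of y z] by blast
qed

theorem lemma5p3:
  assumes "in_var_N5 TYPE('a::lattice)"
    and "\<not> (\<exists>e::'a. doubly_reducible e)"
  shows "\<not> (\<exists>x' x b z z' w' w a s y y' c :: 'a.
     distinct [x', x, b, z, z', w', w, a, s, y, y', c] \<and>
     (\<forall>i<12. \<forall>j<12. [x', x, b, z, z', w', w, a, s, y, y', c] ! i
                         \<le> [x', x, b, z, z', w', w, a, s, y, y', c] ! j \<longleftrightarrow> P12_le i j) \<and>
     (let h = (\<lambda>(i, j). if i = 0 then [w', w, a, y, y'] ! j else [x', x, b, z, z'] ! j) in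
        lat_gen {x', x, b, z, z', w', w, a, y, y'} = h ` two_by_five \<and>
        inj_on h two_by_five \<and>
        (\<forall>p\<in>two_by_five. \<forall>q\<in>two_by_five.
           h (max (fst p) (fst q), max (snd p) (snd q)) = sup (h p) (h q) \<and>
           h (min (fst p) (fst q), min (snd p) (snd q)) = inf (h p) (h q))))"
proof
  note V = assms(1)
  have nodr: False if "incomparable e1 e2" "incomparable e3 e4" "e = sup e1 e2" "e = inf e3 e4" for e e1 e2 e3 e4 :: 'a
    using assms(2) that unfolding doubly_reducible_def by blast
  assume "\<exists>x' x b z z' w' w a s y y' c :: 'a.
     distinct [x', x, b, z, z', w', w, a, s, y, y', c] \<and>
     (\<forall>i<12. \<forall>j<12. [x', x, b, z, z', w', w, a, s, y, y', c] ! i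
                         \<le> [x', x, b, z, z', w', w, a, s, y, y', c] ! j \<longleftrightarrow> P12_le i j) \<and>
     (let h = (\<lambda>(i, j). if i = 0 then [w', w, a, y, y'] ! j else [x', x, b, z, z'] ! j) in
        lat_gen {x', x, b, z, z', w', w, a, y, y'} = h ` two_by_five \<and>
        inj_on h two_by_five \<and>
        (\<forall>p\<in>two_by_five. \<forall>q\<in>two_by_five.
           h (max (fst p) (fst q), max (snd p) (snd q)) = sup (h p) (h q) \<and>
           h (min (fst p) (fst q), min (snd p) (snd q)) = inf (h p) (h q)))"
  then obtain x' x b z z' w' w a s y y' c :: 'a where
    O: "\<forall>i<12. \<forall>j<12. [x', x, b, z, z', w', w, a, s, y, y', c] ! i
                         \<le> [x', x, b, z, z', w', w, a, s, y, y', c] ! j \<longleftrightarrow> P12_le i j"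
    and G: "let h = (\<lambda>(i, j). if i = 0 then [w', w, a, y, y'] ! j else [x', x, b, z, z'] ! j) in
        lat_gen {x', x, b, z, z', w', w, a, y, y'} = h ` two_by_five \<and>
        inj_on h two_by_five \<and>
        (\<forall>p\<in>two_by_five. \<forall>q\<in>two_by_five.
           h (max (fst p) (fst q), max (snd p) (snd q)) = sup (h p) (h q) \<and>
           h (min (fst p) (fst q), min (snd p) (snd q)) = inf (h p) (h q))"
    by blast
  define h where "h = (\<lambda>(i::nat, j::nat). if i = 0 then [w', w, a, y, y'] ! j else [x', x, b, z, z'] ! j)"
  have HJ: "\<forall>p\<in>two_by_five. \<forall>q\<in>two_by_five.
           h (max (fst p) (fst q), max (snd p) (snd q)) = sup (h p) (h q) \<and>
           h (min (fst p) (fst q), min (snd p) (snd q)) = inf (h p) (h q)"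
    using G unfolding Let_def h_def by blast
  have T: "(i,j) \<in> two_by_five" if "i \<le> 1" "j \<le> 4" for i j using that by (simp add: two_by_five_def)
  have j0: "h (max i k, max j l) = sup (h (i,j)) (h (k,l)) \<and> h (min i k, min j l) = inf (h (i,j)) (h (k,l))"
    if "i \<le> 1" "j \<le> 4" "k \<le> 1" "l \<le> 4" for i j k l
    using HJ[rule_format, OF T[OF that(1,2)] T[OF that(3,4)]] by simp
  have j1: "h (max i k, max j l) = sup (h (i,j)) (h (k,l))" if "i \<le> 1" "j \<le> 4" "k \<le> 1" "l \<le> 4" for i j k l
    using j0[OF that] by blast
  have j2: "h (min i k, min j l) = inf (h (i,j)) (h (k,l))" if "i \<le> 1" "j \<le> 4" "k \<le> 1" "l \<le> 4" for i j k l
    using j0[OF that] by blast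
  have bz: "sup b y = z" using j1[of 1 2 0 3] by (simp add: h_def)
  have zy: "inf z y' = y" using j2[of 1 3 0 4] by (simp add: h_def)
  have xx: "sup x' w = x" using j1[of 1 0 0 1] by (simp add: h_def)
  have xa: "inf x a = w" using j2[of 1 1 0 2] by (simp add: h_def)
  have by': "inf b y = a" using j2[of 1 2 0 3] by (simp add: h_def)
  have xy': "inf x y' = w" using j2[of 1 1 0 4] by (simp add: h_def)
  have x'y: "inf x' y = w'" using j2[of 1 0 0 3] by (simp add: h_def)
  have x'w: "inf x' w = w'" using j2[of 1 0 0 1] by (simp add: h_def)
  have bxa: "sup x a = b" using j1[of 1 1 0 2] by (simp add: h_def)
  have pos: "[x', x, b, z, z', w', w, a, s, y, y', c] ! i \<le> [x', x, b, z, z', w', w, a, s, y, y', c] ! j"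
    if "(i,j) \<in> P12_gen" for i j
  proof -
    have "i < 12 \<and> j < 12" using that by (auto simp: P12_gen_def)
    thus ?thesis using O P12_gen_le[OF that] by blast
  qed
  have neg: "\<not> [x', x, b, z, z', w', w, a, s, y, y', c] ! i \<le> [x', x, b, z, z', w', w, a, s, y, y', c] ! j"
    if "i < 12" "j < 12" "i \<noteq> j" "i \<notin> down j" for i j
    using O that P12_le_cases by blast
  have "x' \<le> x" using pos[of 0 1] by (simp add: P12_gen_def)
  have "x \<le> b" using pos[of 1 2] by (simp add: P12_gen_def)
  have "b \<le> z" using pos[of 2 3] by (simp add: P12_gen_def)
  have "w' \<le> w" using pos[of 5 6] by (simp add: P12_gen_def)
  have "w \<le> a" using pos[of 6 7] by (simp add: P12_gen_def)
  have "a \<le> s" using pos[of 7 8] by (simp add: P12_gen_def)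
  have "s \<le> y" using pos[of 8 9] by (simp add: P12_gen_def)
  have "y \<le> y'" using pos[of 9 10] by (simp add: P12_gen_def)
  have "w' \<le> x'" using pos[of 5 0] by (simp add: P12_gen_def)
  have "w \<le> x" using pos[of 6 1] by (simp add: P12_gen_def)
  have "a \<le> c" using pos[of 7 11] by (simp add: P12_gen_def)
  have "c \<le> b" using pos[of 11 2] by (simp add: P12_gen_def)
  have "y \<le> z" using pos[of 9 3] by (simp add: P12_gen_def)
  have n_yb: "\<not> y \<le> b" using neg[of 9 2] by (simp add: down_def downL_def)
  have n_cy: "\<not> c \<le> y" using neg[of 11 9] by (simp add: down_def downL_def)
  have n_y'z: "\<not> y' \<le> z" using neg[of 10 3] by (simp add: down_def downL_def)
  have n_xw: "\<not> x \<le> w" using neg[of 1 6] by (simp add: down_def downL_def)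
  have n_wx': "\<not> w \<le> x'" using neg[of 6 0] by (simp add: down_def downL_def)
  have n_x'w': "\<not> x' \<le> w'" using neg[of 0 5] by (simp add: down_def downL_def)
  have n_xc: "\<not> x \<le> c" using neg[of 1 11] by (simp add: down_def downL_def)
  have n_ax: "\<not> a \<le> x" using neg[of 7 1] by (simp add: down_def downL_def)
  have n_sb: "\<not> s \<le> b" using neg[of 8 2] by (simp add: down_def downL_def)
  show False
  proof (cases "inf x c \<le> w")
    case A: True
    show ?thesis
    proof (rule nodr)
      show "incomparable y (inf b (sup y' c))"
        unfolding incomparable_def
      proof
        show "\<not> y \<le> inf b (sup y' c)" using n_yb le_inf_iff by blast
        show "\<not> inf b (sup y' c) \<le> y"
        proof
          assume "inf b (sup y' c) \<le> y"
          moreover have "c \<le> inf b (sup y' c)" using \<open>c \<le> b\<close> by simp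
          ultimately show False using n_cy by (meson order_trans)
        qed
      qed
      show "incomparable z (sup y' c)"
        unfolding incomparable_def
      proof
        show "\<not> z \<le> sup y' c"
        proof
          assume zz: "z \<le> sup y' c"
          have "w \<le> y'" using \<open>w \<le> a\<close> \<open>a \<le> s\<close> \<open>s \<le> y\<close> \<open>y \<le> y'\<close> by order
          have "w \<le> c" using \<open>w \<le> a\<close> \<open>a \<le> c\<close> by order
          have "inf x (sup y' c) \<le> w"
            by (rule qi1[OF V \<open>w \<le> x\<close> \<open>w \<le> y'\<close> \<open>w \<le> c\<close>]) (use xy' A in simp_all)
          moreover have "x \<le> sup y' c" using zz \<open>x \<le> b\<close> \<open>b \<le> z\<close> by order
          ultimately show False using n_xw by (simp add: inf.absorb1)
        qed
        show "\<not> sup y' c \<le> z" using n_y'z by simp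
      qed
      have "inf (sup b y) (sup y' c) \<le> sup y (inf b (sup y' c))"
        by (rule qi2[OF V \<open>y \<le> y'\<close> \<open>c \<le> b\<close>]) (simp add: bz zy)
      moreover have "sup y (inf b (sup y' c)) \<le> inf z (sup y' c)"
        using \<open>y \<le> z\<close> \<open>y \<le> y'\<close> \<open>b \<le> z\<close>
        by (simp add: le_supI1 inf.coboundedI1)
      ultimately show "inf z (sup y' c) = sup y (inf b (sup y' c))" using bz by (simp add: order.antisym)
    qed simp
  next
    case nA: False
    show ?thesis
    proof (cases "x \<le> sup s c")
      case B: True
      show ?thesis
      proof (rule nodr)
        show "incomparable w (inf x' c)"
          unfolding incomparable_def
        proof
          show "\<not> w \<le> inf x' c" using n_wx' by simp
          show "\<not> inf x' c \<le> w"
          proof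
            assume "inf x' c \<le> w"
            hence d: "inf x' c \<le> w'" using x'w by (metis inf.boundedI inf.cobounded1 le_infE)
            have "w' \<le> s" using \<open>w' \<le> w\<close> \<open>w \<le> a\<close> \<open>a \<le> s\<close> by order
            have "w' \<le> c" using \<open>w' \<le> w\<close> \<open>w \<le> a\<close> \<open>a \<le> c\<close> by order
            have "inf x' s \<le> w'" using x'y \<open>s \<le> y\<close> by (metis inf_mono order_refl)
            have "inf x' (sup s c) \<le> w'"
              by (rule qi1[OF V \<open>w' \<le> x'\<close> \<open>w' \<le> s\<close> \<open>w' \<le> c\<close> \<open>inf x' s \<le> w'\<close> d])
            moreover have "x' \<le> sup s c" using B \<open>x' \<le> x\<close> by order
            ultimately show False using n_x'w' by (simp add: inf.absorb1)
          qed
        qed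
        show "incomparable x (sup a (inf x' c))"
          unfolding incomparable_def
        proof
          have "sup a (inf x' c) \<le> c" using \<open>a \<le> c\<close> by simp
          thus "\<not> x \<le> sup a (inf x' c)" using n_xc by order
          show "\<not> sup a (inf x' c) \<le> x" using n_ax by simp
        qed
        have "inf (sup x' w) (sup a (inf x' c)) \<le> sup w (inf x' c)"
          by (rule qi3[OF V \<open>w \<le> a\<close> \<open>a \<le> c\<close>]) (simp add: xx xa)
        moreover have "sup w (inf x' c) \<le> inf x (sup a (inf x' c))"
          using \<open>w \<le> x\<close> \<open>w \<le> a\<close> \<open>x' \<le> x\<close>
          by (simp add: le_supI1 le_infI1)
        ultimately show "sup w (inf x' c) = inf x (sup a (inf x' c))" using xx by (simp add: order.antisym)
      qed simp
    next
      case C: False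
      have bs: "inf b s = a"
      proof (rule order.antisym)
        show "inf b s \<le> a" using by' \<open>s \<le> y\<close> by (metis inf_mono order_refl)
        show "a \<le> inf b s" using \<open>a \<le> s\<close> \<open>a \<le> c\<close> \<open>c \<le> b\<close> by (simp add: order_trans)
      qed
      show ?thesis
      proof (rule nodr)
        show "incomparable a (inf x (sup s c))"
          unfolding incomparable_def
        proof
          show "\<not> a \<le> inf x (sup s c)" using n_ax by simp
          show "\<not> inf x (sup s c) \<le> a"
          proof
            assume "inf x (sup s c) \<le> a"
            moreover have "inf x c \<le> inf x (sup s c)" by (simp add: inf.coboundedI2 le_supI2)
            ultimately have "inf x c \<le> a" by (meson order_trans)
            hence "inf x c \<le> inf x a" by simp
            thus False using nA xa by simp
          qed
        qed
        show "incomparable b (sup s (inf x c))"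
          unfolding incomparable_def
        proof
          show "\<not> b \<le> sup s (inf x c)"
          proof
            assume "b \<le> sup s (inf x c)"
            moreover have "sup s (inf x c) \<le> sup s c" by (simp add: le_supI2)
            ultimately show False using C \<open>x \<le> b\<close> by order
          qed
          show "\<not> sup s (inf x c) \<le> b" using n_sb by simp
        qed
        have "inf b (sup s (inf x c)) \<le> sup (inf b s) (inf x (sup s c))"
          by (rule qi4[OF V]) (simp add: bs bxa)
        moreover have "sup (inf b s) (inf x (sup s c)) \<le> inf b (sup s (inf x c))"
          by (rule qi5[OF V \<open>x \<le> b\<close>]) (simp add: bs \<open>a \<le> c\<close>)
        ultimately show "sup a (inf x (sup s c)) = inf b (sup s (inf x c))" using bs by (simp add: order.antisym)
      qed simp
    qed
  qed
qed

end
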